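(* Let $L>0$ be even, $A=\{x\in\{0,1\}^L: x_1+\dots+x_L=L/2\}$, $\mathrm{START}=(1,\dots,1,0,\dots,0)$ ($L/2$ ones followed by $L/2$ zeros) and $\mathrm{ACTIVE}=(0,\dots,0,1,\dots,1)$ ($L/2$ zeros followed by $L/2$ ones). There exist $\mu>0$ and a Boolean network with inputs $D$ with input vector $p=(p_1,\dots,p_L)$ and output vector $q=(q_1,q_2)$ such that the following holds for any initial condition of $D$ (at any initial time $\le 0$, with arbitrary inputs before time $0$). Let $M>1$ and let $p(0),\dots,p(M)$ be inputs with (i) $p(s)\in A$ for $0\le s\le M$, (ii) $p(0)=\mathrm{START}$, (iii) $p(s)\ne\mathrm{START}$ for $0<s\le M$. Let $j\ge0$ be such that $p(s)=\mathrm{ACTIVE}$ for $1\le s\le j$ and $p(j+1)\ne\mathrm{ACTIVE}$ (or $j=M$ if $p(1)=\dots=p(M)=\mathrm{ACTIVE}$). Then $q(s)=(1,0)$ for $\mu\le s\le\mu+j$ and $q(s)=(0,1)$ for $\mu+j<s\le\mu+M$. Moreover $D$ is cooperative, every node of its digraph has indegree and outdegree at most $2$, input variables have indegree $0$ and output variables have outdegree $0$. (The same holds after any time shift of the input sequence.)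
   Context: A Boolean network with inputs consists of finitely many Boolean variables, some designated as input variables whose values at each time are prescribed externally (arbitrarily), and the remaining (internal) variables, each updated simultaneously at each discrete time step by $x(t)=f_x(\text{values of all variables at time } t-1)$ for a Boolean function $f_x$; output variables are designated internal variables. It is cooperative if every update function $f_x$ is monotone nondecreasing with respect to the componentwise order (equivalently, expressible using only $\wedge$ and $\vee$). Its digraph has an arc from variable $y$ to internal variable $x$ iff $f_x$ actually depends on $y$. *)

theory Defs
  imports Main
begin

text \<open>Variables are natural numbers; V is the finite set of
  variables, I \<subseteq> V the input variables, and f x is the update function of an internal
  variable x \<in> V - I, applied to the state (values of all variables) at the previous time.\<close>

definition bn_wf :: "nat set \<Rightarrow> nat set \<Rightarrow> (nat \<Rightarrow> (nat \<Rightarrow> bool) \<Rightarrow> bool) \<Rightarrow> bool" where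
  "bn_wf V I f \<longleftrightarrow> finite V \<and> I \<subseteq> V \<and>
     (\<forall>x\<in>V - I. \<forall>s s'. (\<forall>v\<in>V. s v = s' v) \<longrightarrow> f x s = f x s')"

definition depends :: "(nat \<Rightarrow> (nat \<Rightarrow> bool) \<Rightarrow> bool) \<Rightarrow> nat \<Rightarrow> nat \<Rightarrow> bool" where
  "depends f x y \<longleftrightarrow> (\<exists>s. f x s \<noteq> f x (s(y := \<not> s y)))"

definition arc :: "nat set \<Rightarrow> nat set \<Rightarrow> (nat \<Rightarrow> (nat \<Rightarrow> bool) \<Rightarrow> bool) \<Rightarrow> nat \<Rightarrow> nat \<Rightarrow> bool" where
  "arc V I f y x \<longleftrightarrow> y \<in> V \<and> x \<in> V - I \<and> depends f x y"

definition indeg :: "nat set \<Rightarrow> nat set \<Rightarrow> (nat \<Rightarrow> (nat \<Rightarrow> bool) \<Rightarrow> bool) \<Rightarrow> nat \<Rightarrow> nat" where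
  "indeg V I f x = card {y. arc V I f y x}"

definition outdeg :: "nat set \<Rightarrow> nat set \<Rightarrow> (nat \<Rightarrow> (nat \<Rightarrow> bool) \<Rightarrow> bool) \<Rightarrow> nat \<Rightarrow> nat" where
  "outdeg V I f y = card {x. arc V I f y x}"

definition cooperative :: "nat set \<Rightarrow> nat set \<Rightarrow> (nat \<Rightarrow> (nat \<Rightarrow> bool) \<Rightarrow> bool) \<Rightarrow> bool" where
  "cooperative V I f \<longleftrightarrow> (\<forall>x\<in>V - I. mono (f x))"

definition is_run :: "nat set \<Rightarrow> nat set \<Rightarrow> (nat \<Rightarrow> (nat \<Rightarrow> bool) \<Rightarrow> bool) \<Rightarrow> int \<Rightarrow> (int \<Rightarrow> nat \<Rightarrow> bool) \<Rightarrow> bool" where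
  "is_run V I f t0 x \<longleftrightarrow> (\<forall>t>t0. \<forall>v\<in>V - I. x t v = f v (x (t - 1)))"

text \<open>Input vectors as functions on indices 1..L.\<close>
definition in_A :: "nat \<Rightarrow> (nat \<Rightarrow> bool) \<Rightarrow> bool" where
  "in_A L u \<longleftrightarrow> card {i\<in>{1..L}. u i} = L div 2"

definition is_START :: "nat \<Rightarrow> (nat \<Rightarrow> bool) \<Rightarrow> bool" where
  "is_START L u \<longleftrightarrow> (\<forall>i\<in>{1..L}. u i = (i \<le> L div 2))"

definition is_ACTIVE :: "nat \<Rightarrow> (nat \<Rightarrow> bool) \<Rightarrow> bool" where
  "is_ACTIVE L u \<longleftrightarrow> (\<forall>i\<in>{1..L}. u i = (L div 2 < i))"

end

theory Submission
  imports Defs "HOL-Library.Countable"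
begin


datatype node = Inp nat | Dl bool nat nat | Acc bool bool nat
  | Sd bool | Sd2 bool | Ad bool | E bool | Bn bool | Cn bool | Cd bool | X bool | Y bool | Q bool

instance node :: countable by countable_datatype

definition opb :: "bool \<Rightarrow> bool \<Rightarrow> bool \<Rightarrow> bool" where
  "opb b p q = (if b then p \<and> q else p \<or> q)"

definition glob :: "nat \<Rightarrow> bool \<Rightarrow> nat \<Rightarrow> nat" where
  "glob h g k = (if g then k else h + k)"

fun valid :: "nat \<Rightarrow> node \<Rightarrow> bool" where
  "valid h (Inp i) = (1 \<le> i \<and> i \<le> 2*h)"
| "valid h (Dl g k m) = (1 \<le> m \<and> m < k \<and> k \<le> h)"
| "valid h (Acc g c k) = (1 \<le> k \<and> k \<le> h)"
| "valid h _ = True"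

fun ins :: "nat \<Rightarrow> node \<Rightarrow> node list" where
  "ins h (Inp i) = []"
| "ins h (Dl g k m) = (if m = 1 then [Inp (glob h g k)] else [Dl g k (m-1)])"
| "ins h (Acc g c k) = (if k = 1 then [Inp (glob h g 1)] else [Acc g c (k-1), Dl g k (k-1)])"
| "ins h (Sd b) = [Acc b b h]"
| "ins h (Sd2 b) = [Sd b]"
| "ins h (Ad b) = [Acc (\<not>b) b h]"
| "ins h (E b) = [Ad b, Sd2 b]"
| "ins h (Bn b) = [Sd2 b, E b]"
| "ins h (Cn b) = [Acc (\<not>b) b h, Ad b]"
| "ins h (Cd b) = [Cn b]"
| "ins h (X b) = [Bn b, Y b]"
| "ins h (Y b) = [Cd b, X b]"
| "ins h (Q b) = [X b]"

fun fn :: "nat \<Rightarrow> node \<Rightarrow> (node \<Rightarrow> bool) \<Rightarrow> bool" where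
  "fn h (Inp i) s = False"
| "fn h (Dl g k m) s = (if m = 1 then s (Inp (glob h g k)) else s (Dl g k (m-1)))"
| "fn h (Acc g c k) s = (if k = 1 then s (Inp (glob h g 1)) else opb c (s (Acc g c (k-1))) (s (Dl g k (k-1))))"
| "fn h (Sd b) s = s (Acc b b h)"
| "fn h (Sd2 b) s = s (Sd b)"
| "fn h (Ad b) s = s (Acc (\<not>b) b h)"
| "fn h (E b) s = opb b (s (Ad b)) (s (Sd2 b))"
| "fn h (Bn b) s = opb (\<not>b) (s (Sd2 b)) (s (E b))"
| "fn h (Cn b) s = opb b (s (Acc (\<not>b) b h)) (s (Ad b))"
| "fn h (Cd b) s = s (Cn b)"
| "fn h (X b) s = opb (\<not>b) (s (Bn b)) (s (Y b))"
| "fn h (Y b) s = opb b (s (Cd b)) (s (X b))"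
| "fn h (Q b) s = s (X b)"

fun cons :: "nat \<Rightarrow> node \<Rightarrow> node list" where
  "cons h (Inp i) = (if i \<le> h then (if i = 1 then [Acc True True 1, Acc True False 1] else [Dl True i 1])
      else (if i = h+1 then [Acc False True 1, Acc False False 1] else [Dl False (i-h) 1]))"
| "cons h (Dl g k m) = (if m+1 < k then [Dl g k (m+1)] else [Acc g True k, Acc g False k])"
| "cons h (Acc g c k) = (if k < h then [Acc g c (k+1)] else if g = c then [Sd g] else [Ad c, Cn c])"
| "cons h (Sd b) = [Sd2 b]"
| "cons h (Sd2 b) = [E b, Bn b]"
| "cons h (Ad b) = [E b, Cn b]"
| "cons h (E b) = [Bn b]"
| "cons h (Bn b) = [X b]"
| "cons h (Cn b) = [Cd b]"
| "cons h (Cd b) = [Y b]"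
| "cons h (X b) = [Y b, Q b]"
| "cons h (Y b) = [X b]"
| "cons h (Q b) = []"

lemma ins_valid: "valid h a \<Longrightarrow> h \<ge> 1 \<Longrightarrow> z \<in> set (ins h a) \<Longrightarrow> valid h z"
  by (cases a) (auto simp: glob_def split: if_splits)

lemma fn_local: "(\<forall>z\<in>set (ins h a). s z = s' z) \<Longrightarrow> fn h a s = fn h a s'"
  by (cases a) auto

lemma fn_mono: "(\<forall>z. s z \<longrightarrow> s' z) \<Longrightarrow> fn h a s \<Longrightarrow> fn h a s'"
  by (cases a) (auto simp: opb_def split: if_splits)

lemma ins_cons: "valid h a \<Longrightarrow> z \<in> set (ins h a) \<Longrightarrow> a \<in> set (cons h z)"
  by (cases a) (auto simp: glob_def split: if_splits)

lemma len_ins: "length (ins h a) \<le> 2"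
  by (cases a) auto

lemma len_cons: "length (cons h a) \<le> 2"
  by (cases a) auto

lemma finite_valid: "finite {a. valid h a}"
proof -
  have "{a. valid h a} \<subseteq> Inp ` {..2*h} \<union> (\<lambda>(g,k,m). Dl g k m) ` (UNIV \<times> {..h} \<times> {..h})
     \<union> (\<lambda>(g,c,k). Acc g c k) ` (UNIV \<times> UNIV \<times> {..h})
     \<union> (\<Union>b. {Sd b, Sd2 b, Ad b, E b, Bn b, Cn b, Cd b, X b, Y b, Q b})"
  proof
    fix a assume "a \<in> {a. valid h a}"
    then show "a \<in> Inp ` {..2*h} \<union> (\<lambda>(g,k,m). Dl g k m) ` (UNIV \<times> {..h} \<times> {..h})
     \<union> (\<lambda>(g,c,k). Acc g c k) ` (UNIV \<times> UNIV \<times> {..h})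
     \<union> (\<Union>b. {Sd b, Sd2 b, Ad b, E b, Bn b, Cn b, Cd b, X b, Y b, Q b})"
      by (cases a) (auto simp: image_iff)
  qed
  moreover have "finite (Inp ` {..2*h} \<union> (\<lambda>(g,k,m). Dl g k m) ` (UNIV \<times> {..h} \<times> {..h})
     \<union> (\<lambda>(g,c,k). Acc g c k) ` (UNIV \<times> UNIV \<times> {..h})
     \<union> (\<Union>b. {Sd b, Sd2 b, Ad b, E b, Bn b, Cn b, Cd b, X b, Y b, Q b}))"
    by simp
  ultimately show ?thesis by (rule finite_subset)
qed



fun notinp :: "node \<Rightarrow> bool" where
  "notinp (Inp i) = False" | "notinp _ = True"

locale runl =
  fixes h :: nat and y :: "int \<Rightarrow> node \<Rightarrow> bool"
  assumes h1: "h \<ge> 1"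
  and step: "\<And>t a. t \<ge> 1 \<Longrightarrow> valid h a \<Longrightarrow> notinp a \<Longrightarrow> y t a = fn h a (y (t-1))"
begin

definition P :: "bool \<Rightarrow> nat \<Rightarrow> int \<Rightarrow> bool" where
  "P g k r = y r (Inp (glob h g k))"

definition Sig :: "bool \<Rightarrow> bool \<Rightarrow> int \<Rightarrow> bool" where
  "Sig g c r = (if c then \<forall>k\<in>{1..h}. P g k r else \<exists>k\<in>{1..h}. P g k r)"

lemma Dl_val: "1 \<le> m \<Longrightarrow> m < k \<Longrightarrow> k \<le> h \<Longrightarrow> t \<ge> int m \<Longrightarrow> y t (Dl g k m) = P g k (t - int m)"
proof (induction m arbitrary: t)
  case 0 then show ?case by simp
next
  case (Suc m)
  have s: "y t (Dl g k (Suc m)) = fn h (Dl g k (Suc m)) (y (t-1))"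
    using Suc.prems by (intro step) auto
  show ?case
  proof (cases "m = 0")
    case True then show ?thesis using s by (simp add: P_def)
  next
    case False
    have "y (t-1) (Dl g k m) = P g k (t - 1 - int m)"
      using Suc False by auto
    then show ?thesis using s False by (simp add: algebra_simps)
  qed
qed

lemma Acc_val: "1 \<le> k \<Longrightarrow> k \<le> h \<Longrightarrow> t \<ge> int k \<Longrightarrow>
  y t (Acc g c k) = (if c then \<forall>k'\<in>{1..k}. P g k' (t - int k) else \<exists>k'\<in>{1..k}. P g k' (t - int k))"
proof (induction k arbitrary: t)
  case 0 then show ?case by simp
next
  case (Suc k)
  have s: "y t (Acc g c (Suc k)) = fn h (Acc g c (Suc k)) (y (t-1))"
    using Suc.prems by (intro step) auto
  show ?case
  proof (cases "k = 0")
    case True then show ?thesis using s by (simp add: P_def)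
  next
    case False
    have ih: "y (t-1) (Acc g c k) = (if c then \<forall>k'\<in>{1..k}. P g k' (t - 1 - int k) else \<exists>k'\<in>{1..k}. P g k' (t - 1 - int k))"
      using Suc False by auto
    have d: "y (t-1) (Dl g (Suc k) k) = P g (Suc k) (t - 1 - int k)"
      using Suc False by (intro Dl_val) auto
    have e: "t - int (Suc k) = t - 1 - int k" by simp
    have sp: "{1..Suc k} = insert (Suc k) {1..k}" using False by auto
    show ?thesis using s False ih d unfolding e sp by (auto simp: opb_def)
  qed
qed

lemma Acc_h: "(r::int) \<ge> 0 \<Longrightarrow> y (r + int h) (Acc g c h) = Sig g c r"
  using Acc_val[of h "r + int h" g c] h1 by (simp add: Sig_def)

lemma stp: "t \<ge> 1 \<Longrightarrow> valid h a \<Longrightarrow> notinp a \<Longrightarrow> t - 1 = t' \<Longrightarrow> y t a = fn h a (y t')"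
  using step by auto

lemma Sd_v: "(r::int) \<ge> 0 \<Longrightarrow> y (r + int h + 1) (Sd b) = Sig b b r"
  using stp[of "r+int h+1" "Sd b" "r + int h"] Acc_h by simp
lemma Sd2_v: "(r::int) \<ge> 0 \<Longrightarrow> y (r + int h + 2) (Sd2 b) = Sig b b r"
  using stp[of "r+int h+2" "Sd2 b" "r + int h + 1"] Sd_v by simp
lemma Ad_v: "(r::int) \<ge> 0 \<Longrightarrow> y (r + int h + 1) (Ad b) = Sig (\<not>b) b r"
  using stp[of "r+int h+1" "Ad b" "r + int h"] Acc_h by simp
lemma E_v: "(r::int) \<ge> 1 \<Longrightarrow> y (r + int h + 2) (E b) = opb b (Sig (\<not>b) b r) (Sig b b (r-1))"
  using stp[of "r+int h+2" "E b" "r + int h + 1"] Ad_v[of r b] Sd2_v[of "r-1" b]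
  by (simp add: add.commute add.left_commute)
lemma Bn_v: "(r::int) \<ge> 0 \<Longrightarrow> y (r + int h + 3) (Bn b) = opb (\<not>b) (Sig b b r) (y (r + int h + 2) (E b))"
  using stp[of "r+int h+3" "Bn b" "r + int h + 2"] Sd2_v[of r b] by simp
lemma Cn_v: "(r::int) \<ge> 1 \<Longrightarrow> y (r + int h + 1) (Cn b) = opb b (Sig (\<not>b) b r) (Sig (\<not>b) b (r-1))"
  using stp[of "r+int h+1" "Cn b" "r + int h"] Acc_h[of r] Ad_v[of "r-1" b]
  by (simp add: add.commute add.left_commute)
lemma Cd_v: "(r::int) \<ge> 1 \<Longrightarrow> y (r + int h + 2) (Cd b) = opb b (Sig (\<not>b) b r) (Sig (\<not>b) b (r-1))"
  using stp[of "r+int h+2" "Cd b" "r + int h + 1"] Cn_v by simp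
lemma X_v: "(r::int) \<ge> 0 \<Longrightarrow> y (r + int h + 4) (X b) =
   opb (\<not>b) (y (r + int h + 3) (Bn b)) (opb b (y (r + int h + 2) (Cd b)) (y (r + int h + 2) (X b)))"
  using stp[of "r+int h+4" "X b" "r + int h + 3"] stp[of "r+int h+3" "Y b" "r + int h + 2"] by simp
lemma Q_v: "(r::int) \<ge> 0 \<Longrightarrow> y (r + int h + 5) (Q b) = y (r + int h + 4) (X b)"
  using stp[of "r+int h+5" "Q b" "r + int h + 4"] by simp

end



context runl begin

lemma T_step: "(n::int) \<ge> 2 \<Longrightarrow> (\<forall>u\<in>{1..n}. act u) = (act n \<and> act (n-1) \<and> (\<forall>u\<in>{1..n-2}. act u))"
proof -
  assume n: "n \<ge> 2"
  have "{1..n} = insert n (insert (n-1) {1..n-2})" using n by auto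
  then show ?thesis by auto
qed

lemma X_claim:
  assumes SB0: "Sig b b 0 = b" and AB0: "Sig (\<not>b) b 0 = (\<not>b)"
    and SBr: "\<forall>r\<in>{1..M}. Sig b b r = (\<not>b)"
    and ABr: "\<forall>r\<in>{1..M}. Sig (\<not>b) b r = (act r = b)"
  shows "int n \<le> M \<Longrightarrow> y (int n + int h + 4) (X b) = ((\<forall>u\<in>{1..int n}. act u) = b)"
proof (induction n rule: less_induct)
  case (less n)
  consider "n = 0" | "n = 1" | "n \<ge> 2" by linarith
  then show ?case
  proof cases
    case 1
    have "y (0 + int h + 4) (X b) = b"
      using X_v[of 0 b] Bn_v[of 0 b] SB0 by (cases b) (auto simp: opb_def)
    then show ?thesis using 1 by simp
  next
    case 2
    have x: "y (1 + int h + 4) (X b) = (act 1 = b)"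
      using X_v[of 1 b] Bn_v[of 1 b] E_v[of 1 b] Cd_v[of 1 b] SB0 AB0 SBr ABr less.prems 2
      by (cases b) (auto simp: opb_def)
    have "{1..1::int} = {1}" by auto
    then show ?thesis using 2 x by simp
  next
    case 3
    have ih: "y (int (n-2) + int h + 4) (X b) = ((\<forall>u\<in>{1..int (n-2)}. act u) = b)"
      using less.IH[of "n-2"] less.prems 3 by auto
    have e1: "int (n-2) + int h + 4 = int n + int h + 2" using 3 by simp
    have e2: "int (n - 2) = int n - 2" using 3 by simp
    have i1: "int n \<in> {1..M}" "int n - 1 \<in> {1..M}" using less.prems 3 by auto
    have "y (int n + int h + 4) (X b) =
      opb b (opb b (Sig (\<not>b) b (int n)) (Sig (\<not>b) b (int n - 1))) (y (int n + int h + 2) (X b))"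
      using X_v[of "int n" b] Bn_v[of "int n" b] E_v[of "int n" b] Cd_v[of "int n" b]
        SBr i1 3 by (cases b) (auto simp: opb_def)
    also have "\<dots> = opb b (opb b (act (int n) = b) (act (int n - 1) = b)) ((\<forall>u\<in>{1..int n - 2}. act u) = b)"
    proof -
      have ih2: "y (int n + int h + 2) (X b) = ((\<forall>u\<in>{1..int n - 2}. act u) = b)"
        using ih[unfolded e1, unfolded e2] .
      show ?thesis using ABr i1 by (simp only: ih2)
    qed
    also have "\<dots> = ((\<forall>u\<in>{1..int n}. act u) = b)"
      using T_step[of "int n" act] 3 by (cases b) (auto simp: opb_def)
    finally show ?thesis .
  qed
qed

end



lemma card_facts:
  assumes h: "h \<ge> 1" and c: "card {i\<in>{1..2*h}. u i} = h"
  shows "(\<exists>k\<in>{1..h}. u (h+k)) = (\<not>(\<forall>k\<in>{1..h}. u k))"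
    and "(\<exists>k\<in>{1..h}. u k) = (\<not>(\<forall>k\<in>{1..h}. u (h+k)))"
proof -
  let ?U = "{i\<in>{1..2*h}. u i}"
  have fU: "finite ?U" by simp
  show "(\<exists>k\<in>{1..h}. u (h+k)) = (\<not>(\<forall>k\<in>{1..h}. u k))"
  proof
    assume "\<exists>k\<in>{1..h}. u (h+k)"
    then obtain k where k: "k \<in> {1..h}" "u (h+k)" by auto
    show "\<not>(\<forall>k\<in>{1..h}. u k)"
    proof
      assume a: "\<forall>k\<in>{1..h}. u k"
      have "insert (h+k) {1..h} \<subseteq> ?U" using a k by auto
      then have "card (insert (h+k) {1..h}) \<le> card ?U" using fU by (rule card_mono[rotated])
      then show False using c k by simp
    qed
  next
    assume n: "\<not>(\<forall>k\<in>{1..h}. u k)"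
    show "\<exists>k\<in>{1..h}. u (h+k)"
    proof (rule ccontr)
      assume "\<not> (\<exists>k\<in>{1..h}. u (h+k))"
      then have sub: "?U \<subseteq> {1..h}"
      proof (intro subsetI)
        fix i assume nn: "\<not> (\<exists>k\<in>{1..h}. u (h+k))" and i: "i \<in> ?U"
        show "i \<in> {1..h}"
        proof (rule ccontr)
          assume "i \<notin> {1..h}"
          then have k: "i - h \<in> {1..h}" and e: "h + (i - h) = i" using i by auto
          have "u (h + (i - h))" unfolding e using i by simp
          then show False using nn k by blast
        qed
      qed
      have "?U = {1..h}" using sub c by (intro card_seteq) auto
      then show False using n by auto
    qed
  qed
  show "(\<exists>k\<in>{1..h}. u k) = (\<not>(\<forall>k\<in>{1..h}. u (h+k)))"
  proof
    assume "\<exists>k\<in>{1..h}. u k"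
    then obtain k where k: "k \<in> {1..h}" "u k" by auto
    show "\<not>(\<forall>k\<in>{1..h}. u (h+k))"
    proof
      assume a: "\<forall>k\<in>{1..h}. u (h+k)"
      have s: "insert k {h+1..2*h} \<subseteq> ?U"
      proof (intro subsetI)
        fix i assume i: "i \<in> insert k {h+1..2*h}"
        show "i \<in> ?U"
        proof (cases "i = k")
          case True then show ?thesis using k by auto
        next
          case False
          then have k: "i - h \<in> {1..h}" and e: "h + (i - h) = i" and ii: "i \<in> {1..2*h}" using i by auto
          have "u (h + (i - h))" using a k by blast
          then show ?thesis using ii unfolding e by simp
        qed
      qed
      have "card (insert k {h+1..2*h}) \<le> card ?U" using fU s by (rule card_mono)
      then show False using c k by simp
    qed
  next
    assume n: "\<not>(\<forall>k\<in>{1..h}. u (h+k))"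
    show "\<exists>k\<in>{1..h}. u k"
    proof (rule ccontr)
      assume "\<not> (\<exists>k\<in>{1..h}. u k)"
      then have sub: "?U \<subseteq> {h+1..2*h}" by auto
      have eq: "?U = {h+1..2*h}" using sub c by (intro card_seteq) auto
      have "\<forall>k\<in>{1..h}. u (h+k)"
      proof
        fix k assume "k \<in> {1..h}"
        then have "h+k \<in> {h+1..2*h}" by auto
        then have "h+k \<in> ?U" by (simp only: eq)
        then show "u (h+k)" by simp
      qed
      then show False using n by blast
    qed
  qed
qed

lemma start_iff: "is_START (2*h) u = ((\<forall>k\<in>{1..h}. u k) \<and> \<not>(\<exists>k\<in>{1..h}. u (h+k)))"
  unfolding is_START_def
proof (rule iffI)
  assume a: "\<forall>i\<in>{1..2*h}. u i = (i \<le> 2 * h div 2)"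
  show "(\<forall>k\<in>{1..h}. u k) \<and> \<not>(\<exists>k\<in>{1..h}. u (h+k))"
  proof (intro conjI ballI notI)
    fix k assume "k \<in> {1..h}" then show "u k" using a by auto
  next
    assume "\<exists>k\<in>{1..h}. u (h+k)"
    then obtain k where "k \<in> {1..h}" "u (h+k)" by auto
    then show False using a[rule_format, of "h+k"] by auto
  qed
next
  assume a: "(\<forall>k\<in>{1..h}. u k) \<and> \<not>(\<exists>k\<in>{1..h}. u (h+k))"
  show "\<forall>i\<in>{1..2*h}. u i = (i \<le> 2 * h div 2)"
  proof
    fix i assume i: "i \<in> {1..2*h}"
    show "u i = (i \<le> 2 * h div 2)"
    proof (cases "i \<le> h")
      case True then show ?thesis using a i by auto
    next
      case False
      have k: "i = h + (i - h)" "i - h \<in> {1..h}" using i False by auto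
      have "\<not> u (h + (i - h))" using a k(2) by blast
      then show ?thesis using k(1) False by simp
    qed
  qed
qed

lemma active_iff: "is_ACTIVE (2*h) u = ((\<forall>k\<in>{1..h}. u (h+k)) \<and> \<not>(\<exists>k\<in>{1..h}. u k))"
  unfolding is_ACTIVE_def
proof (rule iffI)
  assume a: "\<forall>i\<in>{1..2*h}. u i = (2 * h div 2 < i)"
  show "(\<forall>k\<in>{1..h}. u (h+k)) \<and> \<not>(\<exists>k\<in>{1..h}. u k)"
  proof (intro conjI ballI notI)
    fix k assume "k \<in> {1..h}" then show "u (h+k)" using a by auto
  next
    assume "\<exists>k\<in>{1..h}. u k"
    then obtain k where "k \<in> {1..h}" "u k" by auto
    then show False using a[rule_format, of "k"] by auto
  qed
next
  assume a: "(\<forall>k\<in>{1..h}. u (h+k)) \<and> \<not>(\<exists>k\<in>{1..h}. u k)"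
  show "\<forall>i\<in>{1..2*h}. u i = (2 * h div 2 < i)"
  proof
    fix i assume i: "i \<in> {1..2*h}"
    show "u i = (2 * h div 2 < i)"
    proof (cases "i \<le> h")
      case True then show ?thesis using a i by auto
    next
      case False
      have k: "i = h + (i - h)" "i - h \<in> {1..h}" using i False by auto
      have "u (h + (i - h))" using a k(2) by blast
      then show ?thesis using k(1) False by simp
    qed
  qed
qed



definition Vh :: "nat \<Rightarrow> nat set" where "Vh h = to_nat ` {a. valid h a}"
definition pp :: "nat \<Rightarrow> nat" where "pp i = to_nat (Inp i)"
definition Ih :: "nat \<Rightarrow> nat set" where "Ih h = pp ` {1..2*h}"
definition fh :: "nat \<Rightarrow> nat \<Rightarrow> (nat \<Rightarrow> bool) \<Rightarrow> bool" where
  "fh h n s = fn h (from_nat n) (\<lambda>b. s (to_nat b))"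

lemma VI_char: "h \<ge> 1 \<Longrightarrow> x \<in> Vh h - Ih h \<longleftrightarrow> (\<exists>a. x = to_nat a \<and> valid h a \<and> notinp a)"
proof
  assume "x \<in> Vh h - Ih h"
  then obtain a where a: "x = to_nat a" "valid h a" "x \<notin> Ih h" unfolding Vh_def by auto
  have "notinp a"
  proof (cases a)
    case (Inp i) then show ?thesis using a by (auto simp: Ih_def pp_def)
  qed auto
  then show "\<exists>a. x = to_nat a \<and> valid h a \<and> notinp a" using a by auto
next
  assume "\<exists>a. x = to_nat a \<and> valid h a \<and> notinp a"
  then obtain a where a: "x = to_nat a" "valid h a" "notinp a" by auto
  have "x \<notin> Ih h"
  proof
    assume "x \<in> Ih h"
    then obtain i where "x = to_nat (Inp i)" unfolding Ih_def pp_def by auto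
    then have "a = Inp i" using a(1) by simp
    then show False using a(3) by simp
  qed
  then show "x \<in> Vh h - Ih h" using a unfolding Vh_def by auto
qed

lemma fh_enc: "fh h (to_nat a) s = fn h a (\<lambda>b. s (to_nat b))"
  by (simp add: fh_def)

lemma I_sub: "Ih h \<subseteq> Vh h"
  unfolding Ih_def Vh_def pp_def by auto

lemma wf: "h \<ge> 1 \<Longrightarrow> bn_wf (Vh h) (Ih h) (fh h)"
  unfolding bn_wf_def
proof (intro conjI ballI allI impI)
  show "finite (Vh h)" unfolding Vh_def using finite_valid by simp
  show "Ih h \<subseteq> Vh h" by (rule I_sub)
  fix x and s s' :: "nat \<Rightarrow> bool" assume h: "h \<ge> 1" and x: "x \<in> Vh h - Ih h" and ag: "\<forall>v\<in>Vh h. s v = s' v"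
  obtain a where a: "x = to_nat a" "valid h a" using x h VI_char by blast
  have "\<forall>z\<in>set (ins h a). s (to_nat z) = s' (to_nat z)"
    using ag ins_valid[OF a(2) h] unfolding Vh_def by auto
  then show "fh h x s = fh h x s'" unfolding a(1) fh_enc by (rule fn_local)
qed

lemma coop: "cooperative (Vh h) (Ih h) (fh h)"
  unfolding cooperative_def
proof
  fix x assume "x \<in> Vh h - Ih h"
  then obtain a :: node where a: "x = to_nat a" unfolding Vh_def by blast
  show "mono (fh h x)"
  proof (rule monoI)
    fix s s' :: "nat \<Rightarrow> bool" assume "s \<le> s'"
    then have "\<forall>z. s (to_nat z) \<longrightarrow> s' (to_nat z)" by (auto simp: le_fun_def)
    then show "fh h x s \<le> fh h x s'" unfolding a fh_enc using fn_mono by auto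
  qed
qed

lemma dep: "depends (fh h) (to_nat a) y \<Longrightarrow> y \<in> to_nat ` set (ins h a)"
proof (rule ccontr)
  assume d: "depends (fh h) (to_nat a) y" and n: "y \<notin> to_nat ` set (ins h a)"
  from d obtain s where s: "fh h (to_nat a) s \<noteq> fh h (to_nat a) (s(y := \<not> s y))"
    unfolding depends_def by auto
  have "\<forall>z\<in>set (ins h a). s (to_nat z) = (s(y := \<not> s y)) (to_nat z)" using n by auto
  then have "fn h a (\<lambda>b. s (to_nat b)) = fn h a (\<lambda>b. (s(y := \<not> s y)) (to_nat b))"
    by (rule fn_local)
  then show False using s unfolding fh_enc by simp
qed

lemma arc_char: "h \<ge> 1 \<Longrightarrow> arc (Vh h) (Ih h) (fh h) y x \<Longrightarrow>
  \<exists>a b. x = to_nat a \<and> valid h a \<and> notinp a \<and> y = to_nat b \<and> b \<in> set (ins h a)"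
proof -
  assume h: "h \<ge> 1" and ar: "arc (Vh h) (Ih h) (fh h) y x"
  then obtain a where a: "x = to_nat a" "valid h a" "notinp a"
    unfolding arc_def using VI_char by blast
  have "depends (fh h) (to_nat a) y" using ar a unfolding arc_def by simp
  then have "y \<in> to_nat ` set (ins h a)" by (rule dep)
  then show ?thesis using a by blast
qed

lemma indeg_le: "h \<ge> 1 \<Longrightarrow> indeg (Vh h) (Ih h) (fh h) v \<le> 2"
proof -
  assume h: "h \<ge> 1"
  have "{y. arc (Vh h) (Ih h) (fh h) y v} \<subseteq> to_nat ` set (ins h (from_nat v))"
    using arc_char[OF h] by fastforce
  then have "indeg (Vh h) (Ih h) (fh h) v \<le> card (to_nat ` set (ins h (from_nat v)))"
    unfolding indeg_def by (intro card_mono) auto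
  also have "\<dots> \<le> card (set (ins h (from_nat v)))" by (rule card_image_le) simp
  also have "\<dots> \<le> length (ins h (from_nat v))" by (rule card_length)
  also have "\<dots> \<le> 2" by (rule len_ins)
  finally show ?thesis .
qed

lemma outdeg_sub: "h \<ge> 1 \<Longrightarrow> {x. arc (Vh h) (Ih h) (fh h) (to_nat (b::node)) x} \<subseteq> to_nat ` set (cons h b)"
proof
  fix x assume h: "h \<ge> 1" and "x \<in> {x. arc (Vh h) (Ih h) (fh h) (to_nat b) x}"
  then obtain a b' where ab: "x = to_nat a" "valid h a" "to_nat b = to_nat b'" "b' \<in> set (ins h a)"
    using arc_char by blast
  then have "b' = b" by simp
  then have "a \<in> set (cons h b)" using ins_cons ab by blast
  then show "x \<in> to_nat ` set (cons h b)" using ab by blast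
qed

lemma outdeg_le: "h \<ge> 1 \<Longrightarrow> outdeg (Vh h) (Ih h) (fh h) (to_nat (b::node)) \<le> 2"
proof -
  assume h: "h \<ge> 1"
  have "outdeg (Vh h) (Ih h) (fh h) (to_nat b) \<le> card (to_nat ` set (cons h b))"
    unfolding outdeg_def using outdeg_sub[OF h] by (intro card_mono) auto
  also have "\<dots> \<le> card (set (cons h b))" by (rule card_image_le) simp
  also have "\<dots> \<le> length (cons h b)" by (rule card_length)
  also have "\<dots> \<le> 2" by (rule len_cons)
  finally show ?thesis .
qed

lemma outdeg_Q: "h \<ge> 1 \<Longrightarrow> outdeg (Vh h) (Ih h) (fh h) (to_nat (Q b)) = 0"
proof -
  assume h: "h \<ge> 1"
  have "{x. arc (Vh h) (Ih h) (fh h) (to_nat (Q b)) x} = {}" using outdeg_sub[OF h, of "Q b"] by simp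
  then show ?thesis unfolding outdeg_def by (metis card.empty)
qed

lemma indeg_I: "v \<in> Ih h \<Longrightarrow> indeg (Vh h) (Ih h) (fh h) v = 0"
  unfolding indeg_def arc_def by simp



lemma dyn:
  assumes h1: "h \<ge> 1"
  and t0: "t0 \<le> 0" and run: "is_run (Vh h) (Ih h) (fh h) t0 x" and M1: "M > (1::int)"
  and inA: "\<forall>s\<in>{0..M}. in_A (2*h) (\<lambda>i. x s (pp i))"
  and st0: "is_START (2*h) (\<lambda>i. x 0 (pp i))"
  and nst: "\<forall>s\<in>{1..M}. \<not> is_START (2*h) (\<lambda>i. x s (pp i))"
  and j0: "0 \<le> j" and jM: "j \<le> M"
  and actj: "\<forall>s\<in>{1..j}. is_ACTIVE (2*h) (\<lambda>i. x s (pp i))"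
  and nact: "j < M \<longrightarrow> \<not> is_ACTIVE (2*h) (\<lambda>i. x (j + 1) (pp i))"
  shows "(\<forall>s\<in>{int h + 5..int h + 5 + j}. x s (to_nat (Q True)) \<and> \<not> x s (to_nat (Q False))) \<and>
         (\<forall>s\<in>{int h + 5 + j<..int h + 5 + M}. \<not> x s (to_nat (Q True)) \<and> x s (to_nat (Q False)))"
proof -
  define y where "y = (\<lambda>t a. x t (to_nat (a::node)))"
  interpret R: runl h y
  proof
    show "h \<ge> 1" by (rule h1)
    fix t :: int and a assume t: "t \<ge> 1" and a: "valid h a" "notinp a"
    have "to_nat a \<in> Vh h - Ih h" using VI_char[OF h1] a by blast
    then have "x t (to_nat a) = fh h (to_nat a) (x (t-1))" using run t t0 unfolding is_run_def by auto
    then show "y t a = fn h a (y (t-1))" unfolding y_def fh_enc by simp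
  qed
  define act where "act = (\<lambda>r. is_ACTIVE (2*h) (\<lambda>i. x r (pp i)))"
  define SS where "SS = (\<lambda>r. \<forall>k\<in>{1..h}. x r (pp k))"
  define AA where "AA = (\<lambda>r. \<forall>k\<in>{1..h}. x r (pp (h+k)))"
  define NS where "NS = (\<lambda>r. \<exists>k\<in>{1..h}. x r (pp (h+k)))"
  define NA where "NA = (\<lambda>r. \<exists>k\<in>{1..h}. x r (pp k))"
  have sig: "R.Sig True True r = SS r" "R.Sig False True r = AA r"
      "R.Sig True False r = NA r" "R.Sig False False r = NS r" for r
    unfolding R.Sig_def R.P_def by (simp_all add: y_def glob_def SS_def AA_def NA_def NS_def pp_def)
  have cf: "NS r = (\<not> SS r)" "NA r = (\<not> AA r)" "is_START (2*h) (\<lambda>i. x r (pp i)) = SS r"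
    "act r = AA r" if r: "r \<in> {0..M}" for r
  proof -
    have c: "card {i\<in>{1..2*h}. x r (pp i)} = h" using inA r unfolding in_A_def by simp
    show ns: "NS r = (\<not> SS r)" using card_facts(1)[OF h1 c] unfolding NS_def SS_def .
    show na: "NA r = (\<not> AA r)" using card_facts(2)[OF h1 c] unfolding NA_def AA_def .
    show "is_START (2*h) (\<lambda>i. x r (pp i)) = SS r" using ns unfolding start_iff NS_def SS_def by auto
    show "act r = AA r" using na unfolding act_def active_iff NA_def AA_def by auto
  qed
  have r0: "(0::int) \<in> {0..M}" using M1 by simp
  have SS0: "SS 0" using cf(3)[OF r0] st0 by simp
  have NA0: "NA 0" using SS0 h1 unfolding SS_def NA_def by auto
  have rM: "r \<in> {1..M} \<Longrightarrow> r \<in> {0..M}" for r by auto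
  have XT: "int n \<le> M \<Longrightarrow> y (int n + int h + 4) (X True) = ((\<forall>u\<in>{1..int n}. act u) = True)" for n
    apply (rule R.X_claim[where M=M])
    using SS0 NA0 cf[OF r0] cf[OF rM] nst sig by auto
  have XF: "int n \<le> M \<Longrightarrow> y (int n + int h + 4) (X False) = ((\<forall>u\<in>{1..int n}. act u) = False)" for n
    apply (rule R.X_claim[where M=M])
    using SS0 NA0 cf[OF r0] cf[OF rM] nst sig by auto
  have out: "x s (to_nat (Q True)) = (\<forall>u\<in>{1..s - (int h + 5)}. act u)"
    "x s (to_nat (Q False)) = (\<not>(\<forall>u\<in>{1..s - (int h + 5)}. act u))"
    if s: "s \<in> {int h + 5..int h + 5 + M}" for s
  proof -
    define n where "n = nat (s - (int h + 5))"
    have n: "int n = s - (int h + 5)" "int n \<le> M" using s unfolding n_def by auto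
    have e: "s = int n + int h + 5" using n by simp
    show "x s (to_nat (Q True)) = (\<forall>u\<in>{1..s - (int h + 5)}. act u)"
      using R.Q_v[of "int n" True] XT[OF n(2)] unfolding e y_def by simp
    show "x s (to_nat (Q False)) = (\<not>(\<forall>u\<in>{1..s - (int h + 5)}. act u))"
      using R.Q_v[of "int n" False] XF[OF n(2)] unfolding e y_def by simp
  qed
  show ?thesis
  proof (rule conjI; intro ballI)
    fix s assume s: "s \<in> {int h + 5..int h + 5 + j}"
    then have s': "s \<in> {int h + 5..int h + 5 + M}" using jM by auto
    have "\<forall>u\<in>{1..s - (int h + 5)}. act u" using actj s unfolding act_def by auto
    then show "x s (to_nat (Q True)) \<and> \<not> x s (to_nat (Q False))" using out[OF s'] by simp
  next
    fix s assume s: "s \<in> {int h + 5 + j<..int h + 5 + M}"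
    then have s': "s \<in> {int h + 5..int h + 5 + M}" using j0 by auto
    have jm: "j < M" using s by auto
    have "\<not> act (j+1)" using nact jm unfolding act_def by simp
    moreover have "j + 1 \<in> {1..s - (int h + 5)}" using s j0 by auto
    ultimately have "\<not> (\<forall>u\<in>{1..s - (int h + 5)}. act u)" by blast
    then show "\<not> x s (to_nat (Q True)) \<and> x s (to_nat (Q False))" using out[OF s'] by simp
  qed
qed


theorem lemma6:
  fixes L :: nat
  assumes "L > 0" and "even L"
  shows "\<exists>(\<mu>::int) V I f (p::nat \<Rightarrow> nat) q1 q2.
    \<mu> > 0 \<and> bn_wf V I f \<and>
    inj_on p {1..L} \<and> I = p ` {1..L} \<and>
    q1 \<in> V - I \<and> q2 \<in> V - I \<and> q1 \<noteq> q2 \<and>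
    cooperative V I f \<and>
    (\<forall>v\<in>V. indeg V I f v \<le> 2 \<and> outdeg V I f v \<le> 2) \<and>
    (\<forall>v\<in>I. indeg V I f v = 0) \<and>
    outdeg V I f q1 = 0 \<and> outdeg V I f q2 = 0 \<and>
    (\<forall>t0 x (M::int) (j::int).
       t0 \<le> 0 \<and> is_run V I f t0 x \<and> M > 1 \<and>
       (\<forall>s\<in>{0..M}. in_A L (\<lambda>i. x s (p i))) \<and>
       is_START L (\<lambda>i. x 0 (p i)) \<and>
       (\<forall>s\<in>{1..M}. \<not> is_START L (\<lambda>i. x s (p i))) \<and>
       0 \<le> j \<and> j \<le> M \<and>
       (\<forall>s\<in>{1..j}. is_ACTIVE L (\<lambda>i. x s (p i))) \<and>
       (j < M \<longrightarrow> \<not> is_ACTIVE L (\<lambda>i. x (j + 1) (p i)))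
       \<longrightarrow>
       (\<forall>s\<in>{\<mu>..\<mu> + j}. x s q1 \<and> \<not> x s q2) \<and>
       (\<forall>s\<in>{\<mu> + j<..\<mu> + M}. \<not> x s q1 \<and> x s q2))"
proof -
  obtain h where L: "L = 2 * h" using assms(2) by (auto elim: evenE)
  have h1: "h \<ge> 1" using assms(1) L by simp
  have V: "\<forall>v\<in>Vh h. indeg (Vh h) (Ih h) (fh h) v \<le> 2 \<and> outdeg (Vh h) (Ih h) (fh h) v \<le> 2"
  proof
    fix v assume "v \<in> Vh h"
    then obtain b :: node where "v = to_nat b" unfolding Vh_def by blast
    then show "indeg (Vh h) (Ih h) (fh h) v \<le> 2 \<and> outdeg (Vh h) (Ih h) (fh h) v \<le> 2"
      using indeg_le[OF h1] outdeg_le[OF h1] by simp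
  qed
  have Q: "to_nat (Q b) \<in> Vh h - Ih h" for b using VI_char[OF h1] by fastforce
  show ?thesis unfolding L
    apply (rule exI[of _ "int h + 5"], rule exI[of _ "Vh h"], rule exI[of _ "Ih h"], rule exI[of _ "fh h"],
           rule exI[of _ pp], rule exI[of _ "to_nat (Q True)"], rule exI[of _ "to_nat (Q False)"])
    apply (intro conjI)
    subgoal by simp
    subgoal by (rule wf[OF h1])
    subgoal by (simp add: inj_on_def pp_def)
    subgoal by (simp add: Ih_def)
    subgoal by (rule Q)
    subgoal by (rule Q)
    subgoal by simp
    subgoal by (rule coop)
    subgoal by (rule V)
    subgoal using indeg_I by blast
    subgoal by (rule outdeg_Q[OF h1])
    subgoal by (rule outdeg_Q[OF h1])
    subgoal
      apply (intro allI impI)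
      apply (elim conjE)
      apply (rule dyn[OF h1])
      apply assumption+
      done
    done
qed

end
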